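(* If $\Delta;\Gamma\vdash M:A$ in DCC, then $\Gamma^\circ\vdash M^\circ:A^\circ$ in CC.
   Context: DCC: expressions $x\mid U_i\mid\Pi x{:}A.B\mid L@M\mid\ell_i\{\overline M\}$ (label names $\ell_i$, lists $\overline M$); type contexts $\Gamma::=\cdot\mid\Gamma,x{:}A$; label contexts $\Delta::=\cdot\mid\Delta,\ell_i(\{\overline x{:}\overline A\},x{:}A\mapsto L:B)$; substitution with $\ell\{\overline M\}[N/x]=\ell\{\overline{M[N/x]}\}$; reduction $\Delta\vdash\ell\{\overline M\}@N\triangleright L[\overline M/\overline x,N/x]$ for $\ell(\{\overline x{:}\overline A\},x{:}A\mapsto L:B)\in\Delta$; equivalence $\Delta\vdash M\equiv N$: common reduct, or $\Delta\vdash L\triangleright^*\ell\{\overline N\}$, $\Delta\vdash M\triangleright^*M'$, $\ell(\{\overline x{:}\overline A\},x{:}A\mapsto N:B)\in\Delta$, $\Delta\vdash N[\overline N/\overline x]\equiv M'@x$ give $\Delta\vdash L\equiv M$, and symmetrically. Typing/formation (mutual): variables from a well-formed context, $U_i:U_{i+1}$, $\Pi x{:}A.B:U_{\max(i,j)}$, $M@N:B[N/x]$ for $M:\Pi x{:}A.B$, $N:A$, conversion along $\equiv$ to a type $B:U_i$, and: if $\vdash\Delta;\Gamma$, $\ell(\{\overline x{:}\overline A\},x{:}A\mapsto M:B)\in\Delta$, $|\overline M|=|\overline x|$, $\Delta;\Gamma\vdash M_k:A_k[M_1/x_1,\dots,M_{k-1}/x_{k-1}]$ for all $k$, then $\Delta;\Gamma\vdash\ell\{\overline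 M\}:\Pi x{:}A[\overline M/\overline x].B[\overline M/\overline x]$; $\vdash\cdot;\cdot$; fresh label entries may be added when $\Delta;\overline x{:}\overline A\vdash\Pi x{:}A.B:U_i$ and $\Delta;\overline x{:}\overline A,x{:}A\vdash M:B$; $\vdash\Delta;\Gamma,\Delta;\Gamma\vdash A:U_i\Rightarrow\vdash\Delta;\Gamma,x{:}A$. CC: expressions $x\mid U_i\mid\Pi x{:}A.B\mid L\,M\mid\lambda x{:}A.M$ with standard typing rules (variable, $U_i:U_{i+1}$, $\Pi$ in $U_{\max(i,j)}$, $M\,N:B[N/x]$, $\lambda x{:}A.M:\Pi x{:}A.B$ for $M:B$ under $x{:}A$, conversion along $\beta\eta$-equivalence). Backward transformation (relative to $\Delta$, on well-typed terms): $x^\circ=x$, $U_i^\circ=U_i$, $(\Pi x{:}A.B)^\circ=\Pi x{:}A^\circ.B^\circ$, $(M@N)^\circ=M^\circ\,N^\circ$, $(\ell\{\overline M\})^\circ=\lambda x{:}A^\circ[\overline{M^\circ}/\overline x].\,L^\circ[\overline{M^\circ}/\overline x]$ where $\ell(\{\overline x{:}\overline A\},x{:}A\mapsto L:B)\in\Delta$; pointwise on type contexts: $(\Gamma,x{:}A)^\circ=\Gamma^\circ,x{:}A^\circ$. *)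

theory Defs
  imports Main
begin

text \<open>Locally nameless is avoided: both DCC and CC are represented with de Bruijn
indices. A context is a list whose head is the most recently bound variable
(index 0).  Label names are natural numbers.\<close>

datatype dtm = DVar nat | DU nat | DPi dtm dtm | DApp dtm dtm | DLab nat "dtm list"

text \<open>Label declaration ell({x1:A1,...,xn:An}, x:A |-> L : B).
 largs = [A1,...,An] (telescope; A_k lives in the context x_{k-1},...,x_1);
 ldom = A lives in x_n,...,x_1; lbody = L and lcod = B live in x,x_n,...,x_1.\<close>
datatype ldecl = LDecl (lname: nat) (largs: "dtm list") (ldom: dtm) (lbody: dtm) (lcod: dtm)

fun dlift :: "nat \<Rightarrow> dtm \<Rightarrow> dtm" where
  "dlift k (DVar i) = (if i < k then DVar i else DVar (Suc i))"
| "dlift k (DU i) = DU i"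
| "dlift k (DPi A B) = DPi (dlift k A) (dlift (Suc k) B)"
| "dlift k (DApp M N) = DApp (dlift k M) (dlift k N)"
| "dlift k (DLab l Ms) = DLab l (map (dlift k) Ms)"

definition dup :: "(nat \<Rightarrow> dtm) \<Rightarrow> nat \<Rightarrow> dtm" where
  "dup \<sigma> i = (case i of 0 \<Rightarrow> DVar 0 | Suc j \<Rightarrow> dlift 0 (\<sigma> j))"

fun dsubst :: "(nat \<Rightarrow> dtm) \<Rightarrow> dtm \<Rightarrow> dtm" where
  "dsubst \<sigma> (DVar i) = \<sigma> i"
| "dsubst \<sigma> (DU i) = DU i"
| "dsubst \<sigma> (DPi A B) = DPi (dsubst \<sigma> A) (dsubst (dup \<sigma>) B)"
| "dsubst \<sigma> (DApp M N) = DApp (dsubst \<sigma> M) (dsubst \<sigma> N)"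
| "dsubst \<sigma> (DLab l Ms) = DLab l (map (dsubst \<sigma>) Ms)"

text \<open>instantiate the innermost |ts| variables: index i < |ts| becomes ts!i,
the others are shifted down.\<close>
definition dsub_of :: "dtm list \<Rightarrow> nat \<Rightarrow> dtm" where
  "dsub_of ts i = (if i < length ts then ts ! i else DVar (i - length ts))"

definition dinst :: "dtm list \<Rightarrow> dtm \<Rightarrow> dtm" where
  "dinst ts t = dsubst (dsub_of ts) t"

text \<open>L[Ms/xs, N/x] for a label body L is  dinst (N # rev Ms) L.\<close>
inductive dstep :: "ldecl list \<Rightarrow> dtm \<Rightarrow> dtm \<Rightarrow> bool" for \<Delta> where
  d_beta: "d \<in> set \<Delta> \<Longrightarrow> length Ms = length (largs d) \<Longrightarrow>
     dstep \<Delta> (DApp (DLab (lname d) Ms) N) (dinst (N # rev Ms) (lbody d))"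
| d_pi1: "dstep \<Delta> A A' \<Longrightarrow> dstep \<Delta> (DPi A B) (DPi A' B)"
| d_pi2: "dstep \<Delta> B B' \<Longrightarrow> dstep \<Delta> (DPi A B) (DPi A B')"
| d_app1: "dstep \<Delta> M M' \<Longrightarrow> dstep \<Delta> (DApp M N) (DApp M' N)"
| d_app2: "dstep \<Delta> N N' \<Longrightarrow> dstep \<Delta> (DApp M N) (DApp M N')"
| d_lab: "dstep \<Delta> M M' \<Longrightarrow> dstep \<Delta> (DLab l (xs @ M # ys)) (DLab l (xs @ M' # ys))"

abbreviation dsteps :: "ldecl list \<Rightarrow> dtm \<Rightarrow> dtm \<Rightarrow> bool" where
  "dsteps \<Delta> \<equiv> (dstep \<Delta>)\<^sup>*\<^sup>*"

text \<open>N[Ns/xs] for a label body N (leaving x free, x = index 0) is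
  dsubst (dup (dsub_of (rev Ns))) N; and M'@x is DApp (dlift 0 M') (DVar 0).\<close>
inductive dequiv :: "ldecl list \<Rightarrow> dtm \<Rightarrow> dtm \<Rightarrow> bool" for \<Delta> where
  eq_red: "dsteps \<Delta> M P \<Longrightarrow> dsteps \<Delta> N P \<Longrightarrow> dequiv \<Delta> M N"
| eq_eta1: "dsteps \<Delta> L (DLab (lname d) Ns) \<Longrightarrow> dsteps \<Delta> M M' \<Longrightarrow> d \<in> set \<Delta> \<Longrightarrow>
    length Ns = length (largs d) \<Longrightarrow>
    dequiv \<Delta> (dsubst (dup (dsub_of (rev Ns))) (lbody d)) (DApp (dlift 0 M') (DVar 0)) \<Longrightarrow>
    dequiv \<Delta> L M"
| eq_eta2: "dsteps \<Delta> L (DLab (lname d) Ns) \<Longrightarrow> dsteps \<Delta> M M' \<Longrightarrow> d \<in> set \<Delta> \<Longrightarrow>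
    length Ns = length (largs d) \<Longrightarrow>
    dequiv \<Delta> (DApp (dlift 0 M') (DVar 0)) (dsubst (dup (dsub_of (rev Ns))) (lbody d)) \<Longrightarrow>
    dequiv \<Delta> M L"

inductive dwf :: "ldecl list \<Rightarrow> dtm list \<Rightarrow> bool"
  and dtyp :: "ldecl list \<Rightarrow> dtm list \<Rightarrow> dtm \<Rightarrow> dtm \<Rightarrow> bool" where
  wf_empty: "dwf [] []"
| wf_label: "dwf \<Delta> [] \<Longrightarrow> l \<notin> lname ` set \<Delta> \<Longrightarrow>
    dtyp \<Delta> (rev As) (DPi A B) (DU i) \<Longrightarrow> dtyp \<Delta> (A # rev As) L B \<Longrightarrow>
    dwf (LDecl l As A L B # \<Delta>) []"
| wf_cons: "dwf \<Delta> \<Gamma> \<Longrightarrow> dtyp \<Delta> \<Gamma> A (DU i) \<Longrightarrow> dwf \<Delta> (A # \<Gamma>)"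
| t_var: "dwf \<Delta> \<Gamma> \<Longrightarrow> i < length \<Gamma> \<Longrightarrow> dtyp \<Delta> \<Gamma> (DVar i) ((dlift 0 ^^ Suc i) (\<Gamma> ! i))"
| t_univ: "dwf \<Delta> \<Gamma> \<Longrightarrow> dtyp \<Delta> \<Gamma> (DU i) (DU (Suc i))"
| t_pi: "dtyp \<Delta> \<Gamma> A (DU i) \<Longrightarrow> dtyp \<Delta> (A # \<Gamma>) B (DU j) \<Longrightarrow>
    dtyp \<Delta> \<Gamma> (DPi A B) (DU (max i j))"
| t_app: "dtyp \<Delta> \<Gamma> M (DPi A B) \<Longrightarrow> dtyp \<Delta> \<Gamma> N A \<Longrightarrow> dtyp \<Delta> \<Gamma> (DApp M N) (dinst [N] B)"
| t_conv: "dtyp \<Delta> \<Gamma> M A \<Longrightarrow> dequiv \<Delta> A B \<Longrightarrow> dtyp \<Delta> \<Gamma> B (DU i) \<Longrightarrow> dtyp \<Delta> \<Gamma> M B"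
| t_lab: "dwf \<Delta> \<Gamma> \<Longrightarrow> d \<in> set \<Delta> \<Longrightarrow> length Ms = length (largs d) \<Longrightarrow>
    (\<forall>k < length Ms. dtyp \<Delta> \<Gamma> (Ms ! k) (dinst (rev (take k Ms)) (largs d ! k))) \<Longrightarrow>
    dtyp \<Delta> \<Gamma> (DLab (lname d) Ms) (dinst (rev Ms) (DPi (ldom d) (lcod d)))"

section \<open>CC syntax, reduction, typing\<close>

datatype ctm = CVar nat | CU nat | CPi ctm ctm | CApp ctm ctm | CLam ctm ctm

fun clift :: "nat \<Rightarrow> ctm \<Rightarrow> ctm" where
  "clift k (CVar i) = (if i < k then CVar i else CVar (Suc i))"
| "clift k (CU i) = CU i"
| "clift k (CPi A B) = CPi (clift k A) (clift (Suc k) B)"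
| "clift k (CApp M N) = CApp (clift k M) (clift k N)"
| "clift k (CLam A M) = CLam (clift k A) (clift (Suc k) M)"

definition cup :: "(nat \<Rightarrow> ctm) \<Rightarrow> nat \<Rightarrow> ctm" where
  "cup \<sigma> i = (case i of 0 \<Rightarrow> CVar 0 | Suc j \<Rightarrow> clift 0 (\<sigma> j))"

fun csubst :: "(nat \<Rightarrow> ctm) \<Rightarrow> ctm \<Rightarrow> ctm" where
  "csubst \<sigma> (CVar i) = \<sigma> i"
| "csubst \<sigma> (CU i) = CU i"
| "csubst \<sigma> (CPi A B) = CPi (csubst \<sigma> A) (csubst (cup \<sigma>) B)"
| "csubst \<sigma> (CApp M N) = CApp (csubst \<sigma> M) (csubst \<sigma> N)"
| "csubst \<sigma> (CLam A M) = CLam (csubst \<sigma> A) (csubst (cup \<sigma>) M)"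

definition csub_of :: "ctm list \<Rightarrow> nat \<Rightarrow> ctm" where
  "csub_of ts i = (if i < length ts then ts ! i else CVar (i - length ts))"

definition cinst :: "ctm list \<Rightarrow> ctm \<Rightarrow> ctm" where
  "cinst ts t = csubst (csub_of ts) t"

inductive cstep :: "ctm \<Rightarrow> ctm \<Rightarrow> bool" where
  c_beta: "cstep (CApp (CLam A M) N) (cinst [N] M)"
| c_eta: "cstep (CLam A (CApp (clift 0 M) (CVar 0))) M"
| c_pi1: "cstep A A' \<Longrightarrow> cstep (CPi A B) (CPi A' B)"
| c_pi2: "cstep B B' \<Longrightarrow> cstep (CPi A B) (CPi A B')"
| c_app1: "cstep M M' \<Longrightarrow> cstep (CApp M N) (CApp M' N)"
| c_app2: "cstep N N' \<Longrightarrow> cstep (CApp M N) (CApp M N')"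
| c_lam1: "cstep A A' \<Longrightarrow> cstep (CLam A M) (CLam A' M)"
| c_lam2: "cstep M M' \<Longrightarrow> cstep (CLam A M) (CLam A M')"

abbreviation cequiv :: "ctm \<Rightarrow> ctm \<Rightarrow> bool" where
  "cequiv \<equiv> equivclp cstep"

inductive cwf :: "ctm list \<Rightarrow> bool"
  and ctyp :: "ctm list \<Rightarrow> ctm \<Rightarrow> ctm \<Rightarrow> bool" where
  cwf_empty: "cwf []"
| cwf_cons: "cwf \<Gamma> \<Longrightarrow> ctyp \<Gamma> A (CU i) \<Longrightarrow> cwf (A # \<Gamma>)"
| ct_var: "cwf \<Gamma> \<Longrightarrow> i < length \<Gamma> \<Longrightarrow> ctyp \<Gamma> (CVar i) ((clift 0 ^^ Suc i) (\<Gamma> ! i))"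
| ct_univ: "cwf \<Gamma> \<Longrightarrow> ctyp \<Gamma> (CU i) (CU (Suc i))"
| ct_pi: "ctyp \<Gamma> A (CU i) \<Longrightarrow> ctyp (A # \<Gamma>) B (CU j) \<Longrightarrow> ctyp \<Gamma> (CPi A B) (CU (max i j))"
| ct_app: "ctyp \<Gamma> M (CPi A B) \<Longrightarrow> ctyp \<Gamma> N A \<Longrightarrow> ctyp \<Gamma> (CApp M N) (cinst [N] B)"
| ct_lam: "ctyp (A # \<Gamma>) M B \<Longrightarrow> ctyp \<Gamma> (CLam A M) (CPi A B)"
| ct_conv: "ctyp \<Gamma> M A \<Longrightarrow> cequiv A B \<Longrightarrow> ctyp \<Gamma> B (CU i) \<Longrightarrow> ctyp \<Gamma> M B"

section \<open>Backward transformation\<close>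

fun lookup :: "nat \<Rightarrow> ldecl list \<Rightarrow> (ldecl \<times> ldecl list) option" where
  "lookup l [] = None"
| "lookup l (d # \<Delta>) = (if lname d = l then Some (d, \<Delta>) else lookup l \<Delta>)"

lemma lookup_shorter: "lookup l \<Delta> = Some (d, \<Delta>') \<Longrightarrow> length \<Delta>' < length \<Delta>"
  by (induction \<Delta>) (auto split: if_splits)

function bwd :: "ldecl list \<Rightarrow> dtm \<Rightarrow> ctm" where
  "bwd \<Delta> (DVar i) = CVar i"
| "bwd \<Delta> (DU i) = CU i"
| "bwd \<Delta> (DPi A B) = CPi (bwd \<Delta> A) (bwd \<Delta> B)"
| "bwd \<Delta> (DApp M N) = CApp (bwd \<Delta> M) (bwd \<Delta> N)"
| "bwd \<Delta> (DLab l Ms) = (case lookup l \<Delta> of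
      None \<Rightarrow> undefined
    | Some (d, \<Delta>') \<Rightarrow> cinst (rev (map (bwd \<Delta>) Ms)) (CLam (bwd \<Delta>' (ldom d)) (bwd \<Delta>' (lbody d))))"
  by pat_completeness auto
termination
  apply (relation "measures [\<lambda>(\<Delta>, t). length \<Delta>, \<lambda>(\<Delta>, t). size t]")
  apply (auto dest: lookup_shorter simp: less_Suc_eq_le intro: size_list_estimation')
  done

end

theory Submission
  imports Defs
begin

definition liftidx :: "nat \<Rightarrow> nat \<Rightarrow> nat" where
  "liftidx k i = (if i < k then i else Suc i)"

lemma csubst_id: "csubst CVar t = t"
proof -
  have cup_id: "cup CVar = CVar" by (rule ext) (simp add: cup_def split: nat.split)
  show ?thesis by (induction t) (simp_all add: cup_id)
qed

lemma clift_clift: "j \<le> k \<Longrightarrow> clift (Suc k) (clift j u) = clift j (clift k u)"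
  by (induction u arbitrary: j k) auto

lemma R1: "csubst \<sigma> (clift k t) = csubst (\<sigma> \<circ> liftidx k) t"
proof (induction t arbitrary: \<sigma> k)
  case (CPi A B)
  have "(\<lambda>a. cup \<sigma> (liftidx (Suc k) a)) = cup (\<lambda>a. \<sigma> (liftidx k a))"
    by (rule ext) (simp add: cup_def liftidx_def split: nat.split)
  then show ?case using CPi by simp
next
  case (CLam A B)
  have "(\<lambda>a. cup \<sigma> (liftidx (Suc k) a)) = cup (\<lambda>a. \<sigma> (liftidx k a))"
    by (rule ext) (simp add: cup_def liftidx_def split: nat.split)
  then show ?case using CLam by simp
qed (auto simp: liftidx_def)

lemma R2: "clift k (csubst \<sigma> t) = csubst (clift k \<circ> \<sigma>) t"
proof (induction t arbitrary: \<sigma> k)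
  case (CPi A B)
  have "(\<lambda>a. clift (Suc k) (cup \<sigma> a)) = cup (\<lambda>a. clift k (\<sigma> a))"
    by (rule ext) (simp add: cup_def clift_clift split: nat.split)
  then show ?case using CPi by simp
next
  case (CLam A B)
  have "(\<lambda>a. clift (Suc k) (cup \<sigma> a)) = cup (\<lambda>a. clift k (\<sigma> a))"
    by (rule ext) (simp add: cup_def clift_clift split: nat.split)
  then show ?case using CLam by simp
qed auto

lemma clift_as_subst: "clift k t = csubst (CVar \<circ> liftidx k) t"
  using R1[of CVar k t] by (simp add: csubst_id)

lemma R3: "csubst (cup \<sigma>) (clift 0 u) = clift 0 (csubst \<sigma> u)"
proof -
  have "cup \<sigma> \<circ> liftidx 0 = clift 0 \<circ> \<sigma>"
    by (rule ext) (simp add: cup_def liftidx_def)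
  then show ?thesis by (simp add: R1 R2)
qed

lemma csubst_comp: "csubst \<sigma> (csubst \<tau> t) = csubst (\<lambda>i. csubst \<sigma> (\<tau> i)) t"
proof (induction t arbitrary: \<sigma> \<tau>)
  case (CPi A B)
  have "(\<lambda>i. csubst (cup \<sigma>) (cup \<tau> i)) = cup (\<lambda>i. csubst \<sigma> (\<tau> i))"
    by (rule ext) (simp add: cup_def R3 split: nat.split)
  then show ?case using CPi by simp
next
  case (CLam A B)
  have "(\<lambda>i. csubst (cup \<sigma>) (cup \<tau> i)) = cup (\<lambda>i. csubst \<sigma> (\<tau> i))"
    by (rule ext) (simp add: cup_def R3 split: nat.split)
  then show ?case using CLam by simp
qed auto

lemma csubst_shift: "csubst (CVar \<circ> Suc) u = clift 0 u"
proof -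
  have "CVar \<circ> Suc = CVar \<circ> liftidx 0" by (rule ext) (simp add: liftidx_def)
  then show ?thesis by (simp add: clift_as_subst)
qed

lemma cinst1_clift: "cinst [x] (clift 0 u) = u"
  by (simp add: cinst_def R1 csub_of_def liftidx_def comp_def csubst_id[unfolded id_def])

lemma cbeta_subst: "csubst \<sigma> (cinst [N] M) = cinst [csubst \<sigma> N] (csubst (cup \<sigma>) M)"
proof -
  have "(\<lambda>i. csubst \<sigma> (csub_of [N] i)) = (\<lambda>i. csubst (csub_of [csubst \<sigma> N]) (cup \<sigma> i))"
    by (rule ext) (auto simp: csub_of_def cup_def cinst1_clift[unfolded cinst_def] split: nat.split)
  then show ?thesis by (simp add: cinst_def csubst_comp)
qed

lemma cstep_subst: "cstep s t \<Longrightarrow> cstep (csubst \<sigma> s) (csubst \<sigma> t)"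
proof (induction arbitrary: \<sigma> rule: cstep.induct)
  case (c_beta A M N)
  then show ?case using cstep.c_beta by (simp add: cbeta_subst)
next
  case (c_eta A M)
  then show ?case using cstep.c_eta by (simp add: R3 cup_def)
qed (auto intro: cstep.intros)

lemma equivclp_map:
  assumes "\<And>x y. r x y \<Longrightarrow> r (f x) (f y)" and "equivclp r a b"
  shows "equivclp r (f a) (f b)"
  using assms(2)
proof (induction rule: equivclp_induct)
  case base then show ?case by simp
next
  case (step y z)
  then show ?case
    by (metis assms(1) equivclp_into_equivclp sup2CI conversepI)
qed

lemma cequiv_subst: "cequiv s t \<Longrightarrow> cequiv (csubst \<sigma> s) (csubst \<sigma> t)"
  by (rule equivclp_map[where r=cstep], rule cstep_subst)

lemma cequiv_lift: "cequiv s t \<Longrightarrow> cequiv (clift k s) (clift k t)"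
  by (simp add: clift_as_subst cequiv_subst)

lemma cequiv_Pi: "cequiv A A' \<Longrightarrow> cequiv B B' \<Longrightarrow> cequiv (CPi A B) (CPi A' B')"
proof -
  assume a: "cequiv A A'" and b: "cequiv B B'"
  have "cequiv (CPi A B) (CPi A' B)" using equivclp_map[where f="\<lambda>x. CPi x B", OF _ a] c_pi1 by blast
  moreover have "cequiv (CPi A' B) (CPi A' B')" using equivclp_map[where f="\<lambda>x. CPi A' x", OF _ b] c_pi2 by blast
  ultimately show ?thesis by (rule equivclp_trans)
qed

lemma cequiv_Lam: "cequiv A A' \<Longrightarrow> cequiv B B' \<Longrightarrow> cequiv (CLam A B) (CLam A' B')"
proof -
  assume a: "cequiv A A'" and b: "cequiv B B'"
  have "cequiv (CLam A B) (CLam A' B)" using equivclp_map[where f="\<lambda>x. CLam x B", OF _ a] c_lam1 by blast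
  moreover have "cequiv (CLam A' B) (CLam A' B')" using equivclp_map[where f="\<lambda>x. CLam A' x", OF _ b] c_lam2 by blast
  ultimately show ?thesis by (rule equivclp_trans)
qed

lemma cequiv_App: "cequiv A A' \<Longrightarrow> cequiv B B' \<Longrightarrow> cequiv (CApp A B) (CApp A' B')"
proof -
  assume a: "cequiv A A'" and b: "cequiv B B'"
  have "cequiv (CApp A B) (CApp A' B)" using equivclp_map[where f="\<lambda>x. CApp x B", OF _ a] c_app1 by blast
  moreover have "cequiv (CApp A' B) (CApp A' B')" using equivclp_map[where f="\<lambda>x. CApp A' x", OF _ b] c_app2 by blast
  ultimately show ?thesis by (rule equivclp_trans)
qed

lemma cequiv_subst_pt: "(\<And>i. cequiv (\<sigma> i) (\<tau> i)) \<Longrightarrow> cequiv (csubst \<sigma> t) (csubst \<tau> t)"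
proof (induction t arbitrary: \<sigma> \<tau>)
  case (CPi A B)
  have "cequiv (cup \<sigma> i) (cup \<tau> i)" for i
    using CPi.prems by (auto simp: cup_def cequiv_lift split: nat.split)
  then show ?case using CPi by (simp add: cequiv_Pi)
next
  case (CLam A B)
  have "cequiv (cup \<sigma> i) (cup \<tau> i)" for i
    using CLam.prems by (auto simp: cup_def cequiv_lift split: nat.split)
  then show ?case using CLam by (simp add: cequiv_Lam)
qed (auto simp: cequiv_App)

fun cbound :: "nat \<Rightarrow> ctm \<Rightarrow> bool" where
  "cbound n (CVar i) = (i < n)"
| "cbound n (CU i) = True"
| "cbound n (CPi A B) = (cbound n A \<and> cbound (Suc n) B)"
| "cbound n (CApp A B) = (cbound n A \<and> cbound n B)"
| "cbound n (CLam A B) = (cbound n A \<and> cbound (Suc n) B)"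

lemma cbound_cong: "cbound n t \<Longrightarrow> (\<And>i. i < n \<Longrightarrow> \<sigma> i = \<tau> i) \<Longrightarrow> csubst \<sigma> t = csubst \<tau> t"
proof (induction t arbitrary: n \<sigma> \<tau>)
  case (CPi A B)
  have "cup \<sigma> i = cup \<tau> i" if "i < Suc n" for i
    using CPi.prems that by (auto simp: cup_def split: nat.split)
  then show ?case using CPi.prems CPi.IH(1)[of n \<sigma> \<tau>] CPi.IH(2)[of "Suc n" "cup \<sigma>" "cup \<tau>"] by auto
next
  case (CLam A B)
  have "cup \<sigma> i = cup \<tau> i" if "i < Suc n" for i
    using CLam.prems that by (auto simp: cup_def split: nat.split)
  then show ?case using CLam.prems CLam.IH(1)[of n \<sigma> \<tau>] CLam.IH(2)[of "Suc n" "cup \<sigma>" "cup \<tau>"] by auto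
next
  case (CApp A B)
  then show ?case using CApp.IH(1)[of n \<sigma> \<tau>] CApp.IH(2)[of n \<sigma> \<tau>] by simp
qed simp_all

lemma cbound_lift: "cbound m u \<Longrightarrow> cbound (Suc m) (clift k u)"
  by (induction u arbitrary: m k) auto

lemma cbound_subst: "cbound n t \<Longrightarrow> (\<And>i. i < n \<Longrightarrow> cbound m (\<sigma> i)) \<Longrightarrow> cbound m (csubst \<sigma> t)"
proof (induction t arbitrary: n m \<sigma>)
  case (CPi A B)
  have "cbound (Suc m) (cup \<sigma> i)" if "i < Suc n" for i
    using CPi.prems that by (auto simp: cup_def cbound_lift split: nat.split)
  then show ?case using CPi.prems CPi.IH(1)[of n m \<sigma>] CPi.IH(2)[of "Suc n" "Suc m" "cup \<sigma>"] by auto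
next
  case (CLam A B)
  have "cbound (Suc m) (cup \<sigma> i)" if "i < Suc n" for i
    using CLam.prems that by (auto simp: cup_def cbound_lift split: nat.split)
  then show ?case using CLam.prems CLam.IH(1)[of n m \<sigma>] CLam.IH(2)[of "Suc n" "Suc m" "cup \<sigma>"] by auto
next
  case (CApp A B)
  then show ?case using CApp.IH(1)[of n m \<sigma>] CApp.IH(2)[of n m \<sigma>] by simp
qed simp_all

lemma cinst_subst_bound:
  assumes "cbound (length ts) C"
  shows "csubst \<tau> (cinst ts C) = cinst (map (csubst \<tau>) ts) C"
  unfolding cinst_def csubst_comp
  by (rule cbound_cong[OF assms]) (simp add: csub_of_def)


inductive cwf' :: "ctm list \<Rightarrow> bool"
  and ctyp' :: "ctm list \<Rightarrow> ctm \<Rightarrow> ctm \<Rightarrow> bool" where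
  cwf'_empty: "cwf' []"
| cwf'_cons: "cwf' \<Gamma> \<Longrightarrow> ctyp' \<Gamma> A (CU i) \<Longrightarrow> cwf' (A # \<Gamma>)"
| ct'_var: "cwf' \<Gamma> \<Longrightarrow> i < length \<Gamma> \<Longrightarrow> ctyp' \<Gamma> (CVar i) ((clift 0 ^^ Suc i) (\<Gamma> ! i))"
| ct'_univ: "cwf' \<Gamma> \<Longrightarrow> ctyp' \<Gamma> (CU i) (CU (Suc i))"
| ct'_pi: "ctyp' \<Gamma> A (CU i) \<Longrightarrow> ctyp' (A # \<Gamma>) B (CU j) \<Longrightarrow> ctyp' \<Gamma> (CPi A B) (CU (max i j))"
| ct'_app: "ctyp' \<Gamma> M (CPi A B) \<Longrightarrow> ctyp' \<Gamma> N A \<Longrightarrow> ctyp' \<Gamma> (CApp M N) (cinst [N] B)"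
| ct'_lam: "ctyp' \<Gamma> A (CU i) \<Longrightarrow> ctyp' (A # \<Gamma>) M B \<Longrightarrow> ctyp' \<Gamma> (CLam A M) (CPi A B)"
| ct'_conv: "ctyp' \<Gamma> M A \<Longrightarrow> cequiv A B \<Longrightarrow> ctyp' \<Gamma> B (CU i) \<Longrightarrow> ctyp' \<Gamma> M B"

lemma ctyp'_wf: "cwf' \<Gamma> \<Longrightarrow> True" "ctyp' \<Gamma> M A \<Longrightarrow> cwf' \<Gamma>"
  by (induction rule: cwf'_ctyp'.inducts) (auto elim: cwf'.cases)

lemma ctyp_wf: "cwf \<Gamma> \<Longrightarrow> True" "ctyp \<Gamma> M A \<Longrightarrow> cwf \<Gamma>"
  by (induction rule: cwf_ctyp.inducts) (auto elim: cwf.cases)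

lemma ctyp_to': "cwf \<Gamma> \<Longrightarrow> cwf' \<Gamma>" "ctyp \<Gamma> M A \<Longrightarrow> ctyp' \<Gamma> M A"
proof (induction rule: cwf_ctyp.inducts)
  case (ct_lam A \<Gamma> M B)
  then have "cwf' (A # \<Gamma>)" by (blast intro: ctyp'_wf(2))
  then obtain i where "ctyp' \<Gamma> A (CU i)" by (auto elim: cwf'.cases)
  then show ?case using ct_lam by (auto intro: cwf'_ctyp'.intros)
qed (blast intro: cwf'_ctyp'.intros)+

lemma ctyp_from': "cwf' \<Gamma> \<Longrightarrow> cwf \<Gamma>" "ctyp' \<Gamma> M A \<Longrightarrow> ctyp \<Gamma> M A"
  by (induction rule: cwf'_ctyp'.inducts) (blast intro: cwf_ctyp.intros)+

lemma funpow_lift_Suc: "(clift 0 ^^ Suc n) x = clift 0 ((clift 0 ^^ n) x)"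
  by simp

definition rsub :: "(nat \<Rightarrow> nat) \<Rightarrow> nat \<Rightarrow> ctm" where
  "rsub \<rho> i = CVar (\<rho> i)"

definition upr :: "(nat \<Rightarrow> nat) \<Rightarrow> nat \<Rightarrow> nat" where
  "upr \<rho> i = (case i of 0 \<Rightarrow> 0 | Suc j \<Rightarrow> Suc (\<rho> j))"

lemma cup_ren: "cup (rsub \<rho>) = rsub (upr \<rho>)"
  by (rule ext) (simp add: cup_def rsub_def upr_def split: nat.split)

lemma rename_case:
  assumes IHA: "ctyp \<Gamma> (csubst (rsub \<rho>) A) (CU i)"
    and IHB: "\<And>\<Gamma>' \<rho>'. cwf \<Gamma>' \<Longrightarrow>
     (\<forall>i < length (A # \<Theta>). \<rho>' i < length \<Gamma>' \<and>
        (clift 0 ^^ Suc (\<rho>' i)) (\<Gamma>' ! \<rho>' i) = csubst (rsub \<rho>') ((clift 0 ^^ Suc i) ((A # \<Theta>) ! i))) \<Longrightarrow>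
     ctyp \<Gamma>' (csubst (rsub \<rho>') M) (csubst (rsub \<rho>') B)"
    and wfG: "cwf \<Gamma>"
    and H: "\<forall>i < length \<Theta>. \<rho> i < length \<Gamma> \<and>
        (clift 0 ^^ Suc (\<rho> i)) (\<Gamma> ! \<rho> i) = csubst (rsub \<rho>) ((clift 0 ^^ Suc i) (\<Theta> ! i))"
  shows "ctyp (csubst (rsub \<rho>) A # \<Gamma>) (csubst (cup (rsub \<rho>)) M) (csubst (cup (rsub \<rho>)) B)"
proof -
  let ?A' = "csubst (rsub \<rho>) A"
  have wf: "cwf (?A' # \<Gamma>)" using IHA wfG by (rule cwf_cons[rotated])
  have c: "\<forall>k < length (A # \<Theta>). upr \<rho> k < length (?A' # \<Gamma>) \<and>
        (clift 0 ^^ Suc (upr \<rho> k)) ((?A' # \<Gamma>) ! upr \<rho> k) = csubst (rsub (upr \<rho>)) ((clift 0 ^^ Suc k) ((A # \<Theta>) ! k))"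
  proof (intro allI impI)
    fix k assume k: "k < length (A # \<Theta>)"
    show "upr \<rho> k < length (?A' # \<Gamma>) \<and>
        (clift 0 ^^ Suc (upr \<rho> k)) ((?A' # \<Gamma>) ! upr \<rho> k) = csubst (rsub (upr \<rho>)) ((clift 0 ^^ Suc k) ((A # \<Theta>) ! k))"
    proof (cases k)
      case 0
      then show ?thesis by (simp add: cup_ren[symmetric] R3 upr_def)
    next
      case (Suc j)
      then have j: "j < length \<Theta>" using k by simp
      have e1: "csubst (rsub (upr \<rho>)) ((clift 0 ^^ Suc k) ((A # \<Theta>) ! k))
          = clift 0 (csubst (rsub \<rho>) ((clift 0 ^^ Suc j) (\<Theta> ! j)))"
        using Suc by (simp only: funpow_lift_Suc cup_ren[symmetric] R3) simp
      have e2: "(clift 0 ^^ Suc (\<rho> j)) (\<Gamma> ! \<rho> j) = csubst (rsub \<rho>) ((clift 0 ^^ Suc j) (\<Theta> ! j))"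
        using H j by blast
      have e3: "(clift 0 ^^ Suc (upr \<rho> k)) ((?A' # \<Gamma>) ! upr \<rho> k) = clift 0 ((clift 0 ^^ Suc (\<rho> j)) (\<Gamma> ! \<rho> j))"
        using Suc by (simp only: upr_def nat.case funpow_lift_Suc[of "Suc (\<rho> j)"] nth_Cons_Suc)
      have "upr \<rho> k < length (?A' # \<Gamma>)" using Suc H j by (simp add: upr_def)
      then show ?thesis using e1 e2 e3 by simp
    qed
  qed
  show ?thesis using IHB[OF wf c] by (simp add: cup_ren)
qed

lemma rename_lemma:
  "cwf' \<Theta> \<Longrightarrow> True"
  "ctyp' \<Theta> t T \<Longrightarrow> cwf \<Gamma> \<Longrightarrow>
     (\<forall>i < length \<Theta>. \<rho> i < length \<Gamma> \<and>
        (clift 0 ^^ Suc (\<rho> i)) (\<Gamma> ! \<rho> i) = csubst (rsub \<rho>) ((clift 0 ^^ Suc i) (\<Theta> ! i))) \<Longrightarrow>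
     ctyp \<Gamma> (csubst (rsub \<rho>) t) (csubst (rsub \<rho>) T)"
proof (induction arbitrary: \<Gamma> \<rho> and \<Gamma> \<rho> rule: cwf'_ctyp'.inducts)
  case (ct'_var \<Theta> i)
  then show ?case by (metis rsub_def csubst.simps(1) ct_var)
next
  case (ct'_univ \<Theta> i)
  then show ?case by (simp add: ct_univ)
next
  case (ct'_pi \<Theta> A i B j)
  have hA: "ctyp \<Gamma> (csubst (rsub \<rho>) A) (CU i)" using ct'_pi.IH(1)[OF ct'_pi.prems] by simp
  have hB: "ctyp (csubst (rsub \<rho>) A # \<Gamma>) (csubst (cup (rsub \<rho>)) B) (csubst (cup (rsub \<rho>)) (CU j))"
    by (rule rename_case[OF hA ct'_pi.IH(2) ct'_pi.prems])
  show ?case using ct_pi[OF hA] hB by simp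
next
  case (ct'_lam \<Theta> A i M B)
  have hA: "ctyp \<Gamma> (csubst (rsub \<rho>) A) (CU i)" using ct'_lam.IH(1)[OF ct'_lam.prems] by simp
  have hM: "ctyp (csubst (rsub \<rho>) A # \<Gamma>) (csubst (cup (rsub \<rho>)) M) (csubst (cup (rsub \<rho>)) B)"
    by (rule rename_case[OF hA ct'_lam.IH(2) ct'_lam.prems])
  show ?case using ct_lam[OF hM] by simp
next
  case (ct'_app \<Theta> M A B N)
  have "ctyp \<Gamma> (csubst (rsub \<rho>) M) (CPi (csubst (rsub \<rho>) A) (csubst (cup (rsub \<rho>)) B))"
    using ct'_app.IH(1)[OF ct'_app.prems] by simp
  moreover have "ctyp \<Gamma> (csubst (rsub \<rho>) N) (csubst (rsub \<rho>) A)" using ct'_app.IH(2)[OF ct'_app.prems] by simp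
  ultimately show ?case by (simp add: cbeta_subst ct_app)
next
  case (ct'_conv \<Theta> M A B i)
  then show ?case by (metis cequiv_subst csubst.simps(2) ct_conv)
qed simp_all

lemma weaken: "ctyp \<Gamma> t T \<Longrightarrow> ctyp \<Gamma> A (CU i) \<Longrightarrow> ctyp (A # \<Gamma>) (clift 0 t) (clift 0 T)"
proof -
  assume t: "ctyp \<Gamma> t T" and A: "ctyp \<Gamma> A (CU i)"
  have wf: "cwf (A # \<Gamma>)" using A ctyp_wf(2)[OF A] by (simp add: cwf_cons)
  have rs: "rsub Suc = CVar \<circ> Suc" by (rule ext) (simp add: rsub_def)
  have "ctyp (A # \<Gamma>) (csubst (rsub Suc) t) (csubst (rsub Suc) T)"
    by (rule rename_lemma(2)[OF ctyp_to'(2)[OF t] wf]) (simp add: rs csubst_shift)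
  then show ?thesis by (simp add: rs csubst_shift)
qed

lemma subst_lemma:
  "cwf' \<Theta> \<Longrightarrow> True"
  "ctyp' \<Theta> t T \<Longrightarrow> cwf \<Gamma> \<Longrightarrow>
     (\<forall>i < length \<Theta>. ctyp \<Gamma> (\<sigma> i) (csubst \<sigma> ((clift 0 ^^ Suc i) (\<Theta> ! i)))) \<Longrightarrow>
     ctyp \<Gamma> (csubst \<sigma> t) (csubst \<sigma> T)"
proof (induction arbitrary: \<Gamma> \<sigma> and \<Gamma> \<sigma> rule: cwf'_ctyp'.inducts)
  case (ct'_var \<Theta> i)
  then show ?case by simp
next
  case (ct'_univ \<Theta> i)
  then show ?case by (simp add: ct_univ)
next
  case (ct'_pi \<Theta> A i B j)
  let ?A' = "csubst \<sigma> A"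
  have hA: "ctyp \<Gamma> ?A' (CU i)" using ct'_pi by simp
  have wf: "cwf (?A' # \<Gamma>)" using hA ct'_pi.prems(1) by (rule cwf_cons[rotated])
  have c: "\<forall>k < length (A # \<Theta>). ctyp (?A' # \<Gamma>) (cup \<sigma> k) (csubst (cup \<sigma>) ((clift 0 ^^ Suc k) ((A # \<Theta>) ! k)))"
  proof (intro allI impI)
    fix k assume k: "k < length (A # \<Theta>)"
    show "ctyp (?A' # \<Gamma>) (cup \<sigma> k) (csubst (cup \<sigma>) ((clift 0 ^^ Suc k) ((A # \<Theta>) ! k)))"
    proof (cases k)
      case 0
      then show ?thesis using ct_var[OF wf, of 0] by (simp add: R3 cup_def)
    next
      case (Suc j)
      then have "j < length \<Theta>" using k by simp
      then have "ctyp \<Gamma> (\<sigma> j) (csubst \<sigma> ((clift 0 ^^ Suc j) (\<Theta> ! j)))" using ct'_pi.prems(2) by simp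
      from weaken[OF this hA] show ?thesis using Suc
        by (simp only: funpow_lift_Suc R3) (simp add: cup_def)
    qed
  qed
  have hB: "ctyp (?A' # \<Gamma>) (csubst (cup \<sigma>) B) (CU j)"
    using ct'_pi.IH(2)[OF wf c] by (simp add: comp_def)
  show ?case using hA hB by (simp add: ct_pi)
next
  case (ct'_lam \<Theta> A i M B)
  let ?A' = "csubst \<sigma> A"
  have hA: "ctyp \<Gamma> ?A' (CU i)" using ct'_lam by simp
  have wf: "cwf (?A' # \<Gamma>)" using hA ct'_lam.prems(1) by (rule cwf_cons[rotated])
  have c: "\<forall>k < length (A # \<Theta>). ctyp (?A' # \<Gamma>) (cup \<sigma> k) (csubst (cup \<sigma>) ((clift 0 ^^ Suc k) ((A # \<Theta>) ! k)))"
  proof (intro allI impI)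
    fix k assume k: "k < length (A # \<Theta>)"
    show "ctyp (?A' # \<Gamma>) (cup \<sigma> k) (csubst (cup \<sigma>) ((clift 0 ^^ Suc k) ((A # \<Theta>) ! k)))"
    proof (cases k)
      case 0
      then show ?thesis using ct_var[OF wf, of 0] by (simp add: R3 cup_def)
    next
      case (Suc j)
      then have "j < length \<Theta>" using k by simp
      then have "ctyp \<Gamma> (\<sigma> j) (csubst \<sigma> ((clift 0 ^^ Suc j) (\<Theta> ! j)))" using ct'_lam.prems(2) by simp
      from weaken[OF this hA] show ?thesis using Suc
        by (simp only: funpow_lift_Suc R3) (simp add: cup_def)
    qed
  qed
  have hM: "ctyp (?A' # \<Gamma>) (csubst (cup \<sigma>) M) (csubst (cup \<sigma>) B)"
    using ct'_lam.IH(2)[OF wf c] by (simp add: comp_def)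
  show ?case using hM by (simp add: ct_lam)
next
  case (ct'_app \<Theta> M A B N)
  have "ctyp \<Gamma> (csubst \<sigma> M) (CPi (csubst \<sigma> A) (csubst (cup \<sigma>) B))"
    using ct'_app by (simp add: comp_def)
  moreover have "ctyp \<Gamma> (csubst \<sigma> N) (csubst \<sigma> A)" using ct'_app by (simp add: comp_def)
  ultimately show ?case by (simp add: cbeta_subst ct_app)
next
  case (ct'_conv \<Theta> M A B i)
  then show ?case by (metis cequiv_subst csubst.simps(2) ct_conv)
qed simp_all

lemma ctyp_bound: "cwf' \<Gamma> \<Longrightarrow> (\<forall>i < length \<Gamma>. cbound (length \<Gamma> - Suc i) (\<Gamma> ! i))"
  "ctyp' \<Gamma> t T \<Longrightarrow> cbound (length \<Gamma>) t"
proof (induction rule: cwf'_ctyp'.inducts)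
  case (cwf'_cons \<Gamma> A i)
  then show ?case by (auto simp: nth_Cons split: nat.split)
qed auto


fun dgood :: "ldecl list \<Rightarrow> dtm \<Rightarrow> bool" where
  "dgood \<Delta> (DVar i) = True"
| "dgood \<Delta> (DU i) = True"
| "dgood \<Delta> (DPi A B) = (dgood \<Delta> A \<and> dgood \<Delta> B)"
| "dgood \<Delta> (DApp A B) = (dgood \<Delta> A \<and> dgood \<Delta> B)"
| "dgood \<Delta> (DLab l Ms) = ((case lookup l \<Delta> of None \<Rightarrow> False
        | Some (d, _) \<Rightarrow> length Ms = length (largs d)) \<and> (\<forall>M\<in>set Ms. dgood \<Delta> M))"

fun ok :: "ldecl list \<Rightarrow> bool" where
  "ok [] = True"
| "ok (d # \<Delta>) = (ok \<Delta> \<and> lname d \<notin> lname ` set \<Delta> \<and> (\<forall>a\<in>set (largs d). dgood \<Delta> a)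
     \<and> dgood \<Delta> (ldom d) \<and> dgood \<Delta> (lbody d) \<and> dgood \<Delta> (lcod d)
     \<and> ctyp (map (bwd \<Delta>) (rev (largs d))) (CLam (bwd \<Delta> (ldom d)) (bwd \<Delta> (lbody d)))
          (CPi (bwd \<Delta> (ldom d)) (bwd \<Delta> (lcod d))))"

lemma lookup_Some: "lookup l \<Delta> = Some (d, \<Delta>2) \<Longrightarrow> lname d = l \<and> d \<in> set \<Delta>"
  by (induction \<Delta>) (auto split: if_splits)

lemma extend_good:
  assumes "lname e \<notin> lname ` set \<Delta>"
  shows "dgood \<Delta> t \<Longrightarrow> dgood (e # \<Delta>) t \<and> bwd (e # \<Delta>) t = bwd \<Delta> t"
proof (induction t)
  case (DLab l Ms)
  then obtain d \<Delta>2 where lk: "lookup l \<Delta> = Some (d, \<Delta>2)"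
    by (auto split: option.splits)
  then have "lname e \<noteq> l" using lookup_Some[OF lk] assms by auto
  then have lk2: "lookup l (e # \<Delta>) = lookup l \<Delta>" by simp
  have m: "map (bwd (e # \<Delta>)) Ms = map (bwd \<Delta>) Ms" using DLab by auto
  have g: "dgood (e # \<Delta>) (DLab l Ms)" using DLab lk lk2 by auto
  have "bwd (e # \<Delta>) (DLab l Ms) = bwd \<Delta> (DLab l Ms)"
    by (simp only: bwd.simps lk2 m)
  then show ?case using g by simp
qed auto

lemma ok_lookup: "ok \<Delta> \<Longrightarrow> lookup l \<Delta> = Some (d, \<Delta>2) \<Longrightarrow>
   ok (d # \<Delta>2) \<and> (\<forall>t. dgood \<Delta>2 t \<longrightarrow> dgood \<Delta> t \<and> bwd \<Delta> t = bwd \<Delta>2 t)"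
proof (induction \<Delta>)
  case Nil then show ?case by simp
next
  case (Cons e \<Delta>)
  show ?case
  proof (cases "lname e = l")
    case True
    then show ?thesis using Cons.prems extend_good[of e \<Delta>] by auto
  next
    case False
    then have "lookup l \<Delta> = Some (d, \<Delta>2)" using Cons.prems by simp
    then show ?thesis using Cons extend_good[of e \<Delta>] by fastforce
  qed
qed

lemma ok_mem: "ok \<Delta> \<Longrightarrow> d \<in> set \<Delta> \<Longrightarrow> \<exists>\<Delta>2. lookup (lname d) \<Delta> = Some (d, \<Delta>2)"
  by (induction \<Delta>) auto

lemma ok_bound: "ok \<Delta> \<Longrightarrow> lookup l \<Delta> = Some (d, \<Delta>2) \<Longrightarrow>
   cbound (length (largs d)) (CLam (bwd \<Delta>2 (ldom d)) (bwd \<Delta>2 (lbody d)))"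
  using ok_lookup[of \<Delta> l d \<Delta>2] ctyp_bound(2)[OF ctyp_to'(2)] by fastforce

lemma dgood_lift: "dgood \<Delta> (dlift k t) = dgood \<Delta> t"
  by (induction t arbitrary: k) (auto split: option.splits)

lemma bwd_lift: "ok \<Delta> \<Longrightarrow> dgood \<Delta> t \<Longrightarrow> bwd \<Delta> (dlift k t) = clift k (bwd \<Delta> t)"
proof (induction t arbitrary: k)
  case (DLab l Ms)
  then obtain d \<Delta>2 where lk: "lookup l \<Delta> = Some (d, \<Delta>2)" and len: "length Ms = length (largs d)"
    by (auto split: option.splits)
  let ?C = "CLam (bwd \<Delta>2 (ldom d)) (bwd \<Delta>2 (lbody d))"
  have b: "cbound (length (rev (map (bwd \<Delta>) Ms))) ?C" using ok_bound[OF DLab.prems(1) lk] len by simp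
  have m: "map (bwd \<Delta> \<circ> dlift k) (rev Ms) = map (clift k \<circ> bwd \<Delta>) (rev Ms)"
    by (rule map_cong) (use DLab in auto)
  have h: "clift k (cinst (rev (map (bwd \<Delta>) Ms)) ?C) = cinst (map (clift k) (rev (map (bwd \<Delta>) Ms))) ?C"
    unfolding clift_as_subst[of k] by (rule cinst_subst_bound[OF b])
  have "bwd \<Delta> (dlift k (DLab l Ms)) = cinst (map (bwd \<Delta> \<circ> dlift k) (rev Ms)) ?C" using lk by (simp add: rev_map)
  also have "\<dots> = cinst (map (clift k \<circ> bwd \<Delta>) (rev Ms)) ?C" by (simp only: m)
  also have "\<dots> = clift k (bwd \<Delta> (DLab l Ms))" using lk h by (simp add: rev_map)
  finally show ?case .
qed auto

lemma dgood_subst: "dgood \<Delta> t \<Longrightarrow> (\<And>i. dgood \<Delta> (\<sigma> i)) \<Longrightarrow> dgood \<Delta> (dsubst \<sigma> t)"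
proof (induction t arbitrary: \<sigma>)
  case (DPi A B)
  have "dgood \<Delta> (dup \<sigma> i)" for i using DPi.prems by (auto simp: dup_def dgood_lift split: nat.split)
  then show ?case using DPi by simp
qed (auto split: option.splits)

lemma bwd_subst: "ok \<Delta> \<Longrightarrow> dgood \<Delta> t \<Longrightarrow> (\<And>i. dgood \<Delta> (\<sigma> i)) \<Longrightarrow>
   bwd \<Delta> (dsubst \<sigma> t) = csubst (\<lambda>i. bwd \<Delta> (\<sigma> i)) (bwd \<Delta> t)"
proof (induction t arbitrary: \<sigma>)
  case (DPi A B)
  have g: "dgood \<Delta> (dup \<sigma> i)" for i using DPi.prems by (auto simp: dup_def dgood_lift split: nat.split)
  have c: "(\<lambda>i. bwd \<Delta> (dup \<sigma> i)) = cup (\<lambda>i. bwd \<Delta> (\<sigma> i))"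
    using DPi.prems by (auto simp: dup_def cup_def bwd_lift split: nat.split)
  show ?case using DPi.IH(1)[of \<sigma>] DPi.IH(2)[of "dup \<sigma>"] DPi.prems g c by simp
next
  case (DApp A B)
  then show ?case by simp
next
  case (DLab l Ms)
  then obtain d \<Delta>2 where lk: "lookup l \<Delta> = Some (d, \<Delta>2)" and len: "length Ms = length (largs d)"
    by (auto split: option.splits)
  let ?C = "CLam (bwd \<Delta>2 (ldom d)) (bwd \<Delta>2 (lbody d))"
  let ?\<tau> = "\<lambda>i. bwd \<Delta> (\<sigma> i)"
  have b: "cbound (length (rev (map (bwd \<Delta>) Ms))) ?C" using ok_bound[OF DLab.prems(1) lk] len by simp
  have m: "map (bwd \<Delta> \<circ> dsubst \<sigma>) (rev Ms) = map (csubst ?\<tau> \<circ> bwd \<Delta>) (rev Ms)"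
    by (rule map_cong) (use DLab in auto)
  have h: "csubst ?\<tau> (cinst (rev (map (bwd \<Delta>) Ms)) ?C) = cinst (map (csubst ?\<tau>) (rev (map (bwd \<Delta>) Ms))) ?C"
    by (rule cinst_subst_bound[OF b])
  have "bwd \<Delta> (dsubst \<sigma> (DLab l Ms)) = cinst (map (bwd \<Delta> \<circ> dsubst \<sigma>) (rev Ms)) ?C" using lk by (simp add: rev_map)
  also have "\<dots> = cinst (map (csubst ?\<tau> \<circ> bwd \<Delta>) (rev Ms)) ?C" by (simp only: m)
  also have "\<dots> = csubst ?\<tau> (bwd \<Delta> (DLab l Ms))" using lk h by (simp add: rev_map)
  finally show ?case .
qed auto

lemma bwd_dsub_of: "(\<lambda>i. bwd \<Delta> (dsub_of ts i)) = csub_of (map (bwd \<Delta>) ts)"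
  by (rule ext) (simp add: dsub_of_def csub_of_def)

lemma dgood_dsub_of: "\<forall>t\<in>set ts. dgood \<Delta> t \<Longrightarrow> dgood \<Delta> (dsub_of ts i)"
  by (simp add: dsub_of_def)

lemma bwd_dinst: "ok \<Delta> \<Longrightarrow> dgood \<Delta> t \<Longrightarrow> \<forall>s\<in>set ts. dgood \<Delta> s \<Longrightarrow>
   bwd \<Delta> (dinst ts t) = cinst (map (bwd \<Delta>) ts) (bwd \<Delta> t)"
  unfolding dinst_def cinst_def
  by (simp add: bwd_subst dgood_dsub_of bwd_dsub_of)

lemma dgood_dinst: "dgood \<Delta> t \<Longrightarrow> \<forall>s\<in>set ts. dgood \<Delta> s \<Longrightarrow> dgood \<Delta> (dinst ts t)"
  unfolding dinst_def by (simp add: dgood_subst dgood_dsub_of)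


lemma label_facts: "ok \<Delta> \<Longrightarrow> d \<in> set \<Delta> \<Longrightarrow> \<exists>\<Delta>2. lookup (lname d) \<Delta> = Some (d, \<Delta>2) \<and> ok (d # \<Delta>2)
   \<and> (\<forall>t. dgood \<Delta>2 t \<longrightarrow> dgood \<Delta> t \<and> bwd \<Delta> t = bwd \<Delta>2 t)"
  using ok_mem ok_lookup by blast

lemma csub_of_pt: "list_all2 cequiv xs ys \<Longrightarrow> cequiv (csub_of xs i) (csub_of ys i)"
  by (auto simp: csub_of_def list_all2_lengthD list_all2_nthD)

lemma dstep_bwd: "dstep \<Delta> s t \<Longrightarrow> ok \<Delta> \<Longrightarrow> dgood \<Delta> s \<Longrightarrow> dgood \<Delta> t \<and> cequiv (bwd \<Delta> s) (bwd \<Delta> t)"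
proof (induction rule: dstep.induct)
  case (d_beta d Ms N)
  obtain \<Delta>2 where lk: "lookup (lname d) \<Delta> = Some (d, \<Delta>2)" and okd: "ok (d # \<Delta>2)"
    and extd: "\<forall>t. dgood \<Delta>2 t \<longrightarrow> dgood \<Delta> t \<and> bwd \<Delta> t = bwd \<Delta>2 t"
    using label_facts[OF d_beta.prems(1) d_beta.hyps(1)] by blast
  have gMs: "\<forall>s\<in>set (N # rev Ms). dgood \<Delta> s" using d_beta.prems(2) by auto
  have gb: "dgood \<Delta> (lbody d)" using okd extd by auto
  have eb: "bwd \<Delta> (lbody d) = bwd \<Delta>2 (lbody d)" using okd extd by auto
  let ?A = "bwd \<Delta>2 (ldom d)" and ?L = "bwd \<Delta>2 (lbody d)"
  let ?\<tau> = "csub_of (rev (map (bwd \<Delta>) Ms))"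
  have lhs: "bwd \<Delta> (DApp (DLab (lname d) Ms) N) = CApp (CLam (csubst ?\<tau> ?A) (csubst (cup ?\<tau>) ?L)) (bwd \<Delta> N)"
    using lk by (simp add: cinst_def)
  have st: "cstep (CApp (CLam (csubst ?\<tau> ?A) (csubst (cup ?\<tau>) ?L)) (bwd \<Delta> N)) (cinst [bwd \<Delta> N] (csubst (cup ?\<tau>) ?L))"
    by (rule c_beta)
  have "(\<lambda>i. csubst (csub_of [bwd \<Delta> N]) (cup ?\<tau> i)) = csub_of (map (bwd \<Delta>) (N # rev Ms))"
    by (rule ext) (auto simp: cup_def csub_of_def cinst1_clift[unfolded cinst_def] rev_map nth_Cons split: nat.split)
  then have eq: "cinst [bwd \<Delta> N] (csubst (cup ?\<tau>) ?L) = bwd \<Delta> (dinst (N # rev Ms) (lbody d))"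
    using bwd_dinst[OF d_beta.prems(1) gb gMs] eb by (simp add: cinst_def csubst_comp)
  show ?case using dgood_dinst[OF gb gMs] lhs st eq by (metis r_into_equivclp)
next
  case (d_pi1 A A' B) then show ?case by (auto intro: cequiv_Pi)
next
  case (d_pi2 B B' A) then show ?case by (auto intro: cequiv_Pi)
next
  case (d_app1 M M' N) then show ?case by (auto intro: cequiv_App)
next
  case (d_app2 N N' M) then show ?case by (auto intro: cequiv_App)
next
  case (d_lab M M' l xs ys)
  then obtain d \<Delta>2 where lk: "lookup l \<Delta> = Some (d, \<Delta>2)"
    by (auto split: option.splits)
  have g: "dgood \<Delta> M'" and e: "cequiv (bwd \<Delta> M) (bwd \<Delta> M')" using d_lab by auto
  have good: "dgood \<Delta> (DLab l (xs @ M' # ys))" using d_lab g lk by auto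
  have la: "list_all2 cequiv (map (bwd \<Delta>) (xs @ M # ys)) (map (bwd \<Delta>) (xs @ M' # ys))"
    using e by (simp add: list_all2_appendI list.rel_refl list_all2_map1 list_all2_map2)
  then have "list_all2 cequiv (rev (map (bwd \<Delta>) (xs @ M # ys))) (rev (map (bwd \<Delta>) (xs @ M' # ys)))"
    by (simp only: list_all2_rev)
  then have "cequiv (cinst (rev (map (bwd \<Delta>) (xs @ M # ys))) C) (cinst (rev (map (bwd \<Delta>) (xs @ M' # ys))) C)" for C
    unfolding cinst_def by (intro cequiv_subst_pt csub_of_pt)
  then show ?case using good lk by (simp only: bwd.simps option.case prod.case)
qed

lemma dsteps_bwd: "dsteps \<Delta> s t \<Longrightarrow> ok \<Delta> \<Longrightarrow> dgood \<Delta> s \<Longrightarrow> dgood \<Delta> t \<and> cequiv (bwd \<Delta> s) (bwd \<Delta> t)"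
proof (induction rule: rtranclp_induct)
  case base then show ?case by simp
next
  case (step y z)
  then show ?case using dstep_bwd by (meson equivclp_trans)
qed

lemma eta_core:
  assumes okD: "ok \<Delta>" and L: "dsteps \<Delta> L (DLab (lname d) Ns)" and M: "dsteps \<Delta> M M'"
    and d: "d \<in> set \<Delta>" and len: "length Ns = length (largs d)"
    and IH: "dgood \<Delta> (dsubst (dup (dsub_of (rev Ns))) (lbody d)) \<Longrightarrow> dgood \<Delta> (DApp (dlift 0 M') (DVar 0)) \<Longrightarrow>
       cequiv (bwd \<Delta> (dsubst (dup (dsub_of (rev Ns))) (lbody d))) (bwd \<Delta> (DApp (dlift 0 M') (DVar 0)))"
    and gL: "dgood \<Delta> L" and gM: "dgood \<Delta> M"
  shows "cequiv (bwd \<Delta> L) (bwd \<Delta> M)"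
proof -
  obtain \<Delta>2 where lk: "lookup (lname d) \<Delta> = Some (d, \<Delta>2)" and okd: "ok (d # \<Delta>2)"
    and extd: "\<forall>t. dgood \<Delta>2 t \<longrightarrow> dgood \<Delta> t \<and> bwd \<Delta> t = bwd \<Delta>2 t"
    using label_facts[OF okD d] by blast
  have r1: "dgood \<Delta> (DLab (lname d) Ns)" "cequiv (bwd \<Delta> L) (bwd \<Delta> (DLab (lname d) Ns))"
    using dsteps_bwd[OF L okD gL] by auto
  have r2: "dgood \<Delta> M'" "cequiv (bwd \<Delta> M) (bwd \<Delta> M')"
    using dsteps_bwd[OF M okD gM] by auto
  have gNs: "\<forall>s\<in>set (rev Ns). dgood \<Delta> s" using r1(1) by auto
  have gsig: "dgood \<Delta> (dsub_of (rev Ns) i)" for i using gNs by (rule dgood_dsub_of)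
  have gdup: "dgood \<Delta> (dup (dsub_of (rev Ns)) i)" for i
    using gsig by (auto simp: dup_def dgood_lift split: nat.split)
  have gb: "dgood \<Delta> (lbody d)" using okd extd by auto
  have eb: "bwd \<Delta> (lbody d) = bwd \<Delta>2 (lbody d)" using okd extd by auto
  let ?\<tau> = "csub_of (rev (map (bwd \<Delta>) Ns))"
  have c: "(\<lambda>i. bwd \<Delta> (dup (dsub_of (rev Ns)) i)) = cup ?\<tau>"
    using gsig by (auto simp: dup_def cup_def bwd_lift[OF okD] bwd_dsub_of[unfolded fun_eq_iff] rev_map split: nat.split)
  have e1: "bwd \<Delta> (dsubst (dup (dsub_of (rev Ns))) (lbody d)) = csubst (cup ?\<tau>) (bwd \<Delta>2 (lbody d))"
    using bwd_subst[OF okD gb gdup] c eb by simp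
  have IH': "cequiv (csubst (cup ?\<tau>) (bwd \<Delta>2 (lbody d))) (CApp (clift 0 (bwd \<Delta> M')) (CVar 0))"
    using IH dgood_subst[OF gb gdup] r2(1) e1 bwd_lift[OF okD r2(1)] by (simp add: dgood_lift)
  have e2: "bwd \<Delta> (DLab (lname d) Ns) = CLam (csubst ?\<tau> (bwd \<Delta>2 (ldom d))) (csubst (cup ?\<tau>) (bwd \<Delta>2 (lbody d)))"
    using lk by (simp add: cinst_def)
  have "cequiv (bwd \<Delta> (DLab (lname d) Ns)) (CLam (csubst ?\<tau> (bwd \<Delta>2 (ldom d))) (CApp (clift 0 (bwd \<Delta> M')) (CVar 0)))"
    unfolding e2 by (rule cequiv_Lam[OF equivclp_refl IH'])
  also have "cequiv (CLam (csubst ?\<tau> (bwd \<Delta>2 (ldom d))) (CApp (clift 0 (bwd \<Delta> M')) (CVar 0))) (bwd \<Delta> M')"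
    by (rule r_into_equivclp) (rule c_eta)
  finally have "cequiv (bwd \<Delta> (DLab (lname d) Ns)) (bwd \<Delta> M')" .
  then show ?thesis using r1(2) r2(2) by (meson equivclp_trans equivclp_sym)
qed

lemma dequiv_bwd: "dequiv \<Delta> L M \<Longrightarrow> ok \<Delta> \<Longrightarrow> dgood \<Delta> L \<Longrightarrow> dgood \<Delta> M \<Longrightarrow> cequiv (bwd \<Delta> L) (bwd \<Delta> M)"
proof (induction rule: dequiv.induct)
  case (eq_red M P N)
  then show ?case using dsteps_bwd by (meson equivclp_trans equivclp_sym)
next
  case (eq_eta1 L d Ns M M')
  then show ?case using eta_core[of \<Delta> L d Ns M M'] by blast
next
  case (eq_eta2 L d Ns M M')
  have "cequiv (bwd \<Delta> L) (bwd \<Delta> M)"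
    by (rule eta_core[of \<Delta> L d Ns M M']) (use eq_eta2 in \<open>auto intro: equivclp_sym\<close>)
  then show ?case by (rule equivclp_sym)
qed


lemma dgood_funpow: "dgood \<Delta> ((dlift 0 ^^ m) t) = dgood \<Delta> t"
  by (induction m) (auto simp: dgood_lift)

lemma bwd_funpow: "ok \<Delta> \<Longrightarrow> dgood \<Delta> t \<Longrightarrow> bwd \<Delta> ((dlift 0 ^^ m) t) = (clift 0 ^^ m) (bwd \<Delta> t)"
  by (induction m) (auto simp: bwd_lift dgood_funpow)

lemma clift_funpow_subst: "(clift 0 ^^ m) X = csubst (\<lambda>j. CVar (j + m)) X"
proof (induction m)
  case 0 then show ?case using csubst_id by (simp add: fun_eq_iff[symmetric])
next
  case (Suc m)
  have "(\<lambda>j. clift 0 (CVar (j + m))) = (\<lambda>j. CVar (j + Suc m))" by simp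
  then show ?case using Suc by (simp add: R2 comp_def)
qed

lemma tele_type:
  assumes b: "cbound k X" and kn: "k = length ms - Suc i" and i: "i < length ms"
  shows "csubst (csub_of (rev ms)) ((clift 0 ^^ Suc i) X) = cinst (rev (take k ms)) X"
proof -
  have "csubst (csub_of (rev ms)) ((clift 0 ^^ Suc i) X) = csubst (\<lambda>j. csub_of (rev ms) (j + Suc i)) X"
    by (simp only: clift_funpow_subst csubst_comp) simp
  also have "\<dots> = csubst (csub_of (rev (take k ms))) X"
  proof (rule cbound_cong[OF b])
    fix j assume j: "j < k"
    then have "j + Suc i < length ms" using kn i by simp
    then show "csub_of (rev ms) (j + Suc i) = csub_of (rev (take k ms)) j"
      using j kn i by (simp add: csub_of_def rev_nth min_def add.commute) arith
  qed
  finally show ?thesis by (simp add: cinst_def)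
qed

lemma main:
  "dwf \<Delta> \<Gamma> \<Longrightarrow> ok \<Delta> \<and> cwf (map (bwd \<Delta>) \<Gamma>) \<and> (\<forall>A\<in>set \<Gamma>. dgood \<Delta> A)"
  "dtyp \<Delta> \<Gamma> M A \<Longrightarrow> ok \<Delta> \<and> cwf (map (bwd \<Delta>) \<Gamma>) \<and> (\<forall>A\<in>set \<Gamma>. dgood \<Delta> A) \<and>
     dgood \<Delta> M \<and> dgood \<Delta> A \<and> ctyp (map (bwd \<Delta>) \<Gamma>) (bwd \<Delta> M) (bwd \<Delta> A)"
proof (induction rule: dwf_dtyp.inducts)
  case wf_empty
  then show ?case by (simp add: cwf_empty)
next
  case (wf_label \<Delta> l As A B i L)
  then show ?case by (auto simp: cwf_empty intro: ct_lam)
next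
  case (wf_cons \<Delta> \<Gamma> A i)
  then show ?case by (auto intro: cwf_cons)
next
  case (t_var \<Delta> \<Gamma> i)
  then show ?case using ct_var[of "map (bwd \<Delta>) \<Gamma>" i]
    by (simp add: dgood_funpow bwd_funpow del: funpow.simps)
next
  case (t_univ \<Delta> \<Gamma> i)
  then show ?case by (simp add: ct_univ)
next
  case (t_pi \<Delta> \<Gamma> A i B j)
  then show ?case using ct_pi by fastforce
next
  case (t_app \<Delta> \<Gamma> M A B N)
  then show ?case using ct_app[of "map (bwd \<Delta>) \<Gamma>" "bwd \<Delta> M" "bwd \<Delta> A" "bwd \<Delta> B" "bwd \<Delta> N"]
    by (simp add: dgood_dinst bwd_dinst)
next
  case (t_conv \<Delta> \<Gamma> M A B i)
  then show ?case using dequiv_bwd ct_conv by fastforce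
next
  case (t_lab \<Delta> \<Gamma> d Ms)
  have okD: "ok \<Delta>" and wfG: "cwf (map (bwd \<Delta>) \<Gamma>)" and gG: "\<forall>A\<in>set \<Gamma>. dgood \<Delta> A"
    using t_lab.IH by auto
  obtain \<Delta>2 where lk: "lookup (lname d) \<Delta> = Some (d, \<Delta>2)" and okd: "ok (d # \<Delta>2)"
    and extd: "\<forall>t. dgood \<Delta>2 t \<longrightarrow> dgood \<Delta> t \<and> bwd \<Delta> t = bwd \<Delta>2 t"
    using label_facts[OF okD t_lab.hyps(2)] by blast
  define n where "n = length Ms"
  define As where "As = largs d"
  have len: "length As = n" using t_lab.hyps(3) by (simp add: n_def As_def)
  have IHk: "\<And>k. k < n \<Longrightarrow> dgood \<Delta> (Ms ! k) \<and>
     ctyp (map (bwd \<Delta>) \<Gamma>) (bwd \<Delta> (Ms ! k)) (bwd \<Delta> (dinst (rev (take k Ms)) (As ! k)))"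
    using t_lab.IH(2) by (auto simp: n_def As_def)
  have gMs: "\<forall>M\<in>set Ms. dgood \<Delta> M" using IHk by (auto simp: in_set_conv_nth n_def)
  have gAs2: "\<forall>a\<in>set As. dgood \<Delta>2 a" using okd by (simp add: As_def)
  have gdom: "dgood \<Delta>2 (ldom d)" and gcod: "dgood \<Delta>2 (lcod d)" using okd by auto
  let ?ms = "map (bwd \<Delta>) Ms"
  let ?C = "CLam (bwd \<Delta>2 (ldom d)) (bwd \<Delta>2 (lbody d))"
  let ?T = "CPi (bwd \<Delta>2 (ldom d)) (bwd \<Delta>2 (lcod d))"
  let ?\<Theta> = "map (bwd \<Delta>2) (rev As)"
  have hT: "ctyp ?\<Theta> ?C ?T" using okd by (simp add: As_def)
  have wfT: "cwf ?\<Theta>" using ctyp_wf(2)[OF hT] .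
  have bT: "\<forall>i < length ?\<Theta>. cbound (length ?\<Theta> - Suc i) (?\<Theta> ! i)"
    using ctyp_bound(1)[OF ctyp_to'(1)[OF wfT]] .
  have goodterm: "dgood \<Delta> (DLab (lname d) Ms)" using lk gMs t_lab.hyps(3) by simp
  have gPi: "dgood \<Delta> (DPi (ldom d) (lcod d))" using extd gdom gcod by simp
  have gty: "dgood \<Delta> (dinst (rev Ms) (DPi (ldom d) (lcod d)))"
    using dgood_dinst[OF gPi] gMs by simp
  have bty: "bwd \<Delta> (dinst (rev Ms) (DPi (ldom d) (lcod d))) = cinst (rev ?ms) ?T"
    using bwd_dinst[OF okD gPi] gMs extd gdom gcod by (simp add: rev_map)
  have btm: "bwd \<Delta> (DLab (lname d) Ms) = cinst (rev ?ms) ?C"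
    using lk by simp
  have wts: "\<forall>i < length ?\<Theta>. ctyp (map (bwd \<Delta>) \<Gamma>) (csub_of (rev ?ms) i)
                 (csubst (csub_of (rev ?ms)) ((clift 0 ^^ Suc i) (?\<Theta> ! i)))"
  proof (intro allI impI)
    fix i assume i: "i < length ?\<Theta>"
    define k where "k = n - Suc i"
    have iN: "i < n" using i len by simp
    have kn: "k < n" using iN k_def by simp
    have th: "?\<Theta> ! i = bwd \<Delta>2 (As ! k)" using iN len by (simp add: rev_nth k_def)
    have gA: "dgood \<Delta>2 (As ! k)" using gAs2 kn len by simp
    have bA0: "cbound (length ?\<Theta> - Suc i) (?\<Theta> ! i)" using bT i by blast
    have bA: "cbound k (bwd \<Delta>2 (As ! k))" using bA0 unfolding th using len by (simp add: k_def)
    have s: "csub_of (rev ?ms) i = bwd \<Delta> (Ms ! k)"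
      using iN by (simp add: csub_of_def rev_nth n_def k_def)
    have gtk: "\<forall>s\<in>set (rev (take k Ms)). dgood \<Delta> s" using gMs by (auto dest: in_set_takeD)
    have "bwd \<Delta> (dinst (rev (take k Ms)) (As ! k)) = cinst (rev (take k ?ms)) (bwd \<Delta>2 (As ! k))"
      using bwd_dinst[OF okD _ gtk, of "As ! k"] extd gA by (simp add: rev_map take_map)
    also have "\<dots> = csubst (csub_of (rev ?ms)) ((clift 0 ^^ Suc i) (bwd \<Delta>2 (As ! k)))"
      by (rule tele_type[OF bA, symmetric]) (use iN in \<open>simp_all add: k_def n_def\<close>)
    finally show "ctyp (map (bwd \<Delta>) \<Gamma>) (csub_of (rev ?ms) i)
                 (csubst (csub_of (rev ?ms)) ((clift 0 ^^ Suc i) (?\<Theta> ! i)))"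
      using IHk[OF kn] s th by simp
  qed
  have "ctyp (map (bwd \<Delta>) \<Gamma>) (csubst (csub_of (rev ?ms)) ?C) (csubst (csub_of (rev ?ms)) ?T)"
    by (rule subst_lemma(2)[OF ctyp_to'(2)[OF hT] wfG wts])
  then have "ctyp (map (bwd \<Delta>) \<Gamma>) (bwd \<Delta> (DLab (lname d) Ms)) (bwd \<Delta> (dinst (rev Ms) (DPi (ldom d) (lcod d))))"
    unfolding btm bty cinst_def .
  then show ?case using okD wfG gG goodterm gty by blast
qed

theorem lemma3p22:
  assumes "dtyp \<Delta> \<Gamma> M A"
  shows "ctyp (map (bwd \<Delta>) \<Gamma>) (bwd \<Delta> M) (bwd \<Delta> A)"
  using main(2)[OF assms] by blast

end
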